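(* There is no countable right-ordered group $U$ such that every finitely generated totally ordered abelian group admits an order-embedding into $U$. Consequently there is no countable right-ordered group into which every finitely generated right-ordered group order-embeds.
   Context: A right-ordered group is a group with a total order $\le$ such that $x\le y$ implies $xz\le yz$ for all $x,y,z$. A totally ordered group additionally satisfies $x\le y\Rightarrow zx\le zy$. An order-embedding is an injective group homomorphism that preserves the order. *)

theory Defs
  imports "HOL-Algebra.Algebra"
begin

definition total_order_on :: "'a set \<Rightarrow> ('a \<Rightarrow> 'a \<Rightarrow> bool) \<Rightarrow> bool" where
  "total_order_on A R \<longleftrightarrow>
     (\<forall>x\<in>A. R x x) \<and>
     (\<forall>x\<in>A. \<forall>y\<in>A. R x y \<and> R y x \<longrightarrow> x = y) \<and>
     (\<forall>x\<in>A. \<forall>y\<in>A. \<forall>z\<in>A. R x y \<and> R y z \<longrightarrow> R x z) \<and>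
     (\<forall>x\<in>A. \<forall>y\<in>A. R x y \<or> R y x)"

definition right_ordered_group :: "('a, 'b) monoid_scheme \<Rightarrow> ('a \<Rightarrow> 'a \<Rightarrow> bool) \<Rightarrow> bool" where
  "right_ordered_group G R \<longleftrightarrow> group G \<and> total_order_on (carrier G) R \<and>
     (\<forall>x\<in>carrier G. \<forall>y\<in>carrier G. \<forall>z\<in>carrier G.
        R x y \<longrightarrow> R (x \<otimes>\<^bsub>G\<^esub> z) (y \<otimes>\<^bsub>G\<^esub> z))"

definition totally_ordered_group :: "('a, 'b) monoid_scheme \<Rightarrow> ('a \<Rightarrow> 'a \<Rightarrow> bool) \<Rightarrow> bool" where
  "totally_ordered_group G R \<longleftrightarrow> right_ordered_group G R \<and>
     (\<forall>x\<in>carrier G. \<forall>y\<in>carrier G. \<forall>z\<in>carrier G.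
        R x y \<longrightarrow> R (z \<otimes>\<^bsub>G\<^esub> x) (z \<otimes>\<^bsub>G\<^esub> y))"

definition finitely_generated_group :: "('a, 'b) monoid_scheme \<Rightarrow> bool" where
  "finitely_generated_group G \<longleftrightarrow>
     (\<exists>S. finite S \<and> S \<subseteq> carrier G \<and> generate G S = carrier G)"

definition order_embedding ::
  "('a, 'b) monoid_scheme \<Rightarrow> ('a \<Rightarrow> 'a \<Rightarrow> bool) \<Rightarrow> ('c, 'd) monoid_scheme \<Rightarrow> ('c \<Rightarrow> 'c \<Rightarrow> bool)
     \<Rightarrow> ('a \<Rightarrow> 'c) \<Rightarrow> bool" where
  "order_embedding G RG H RH f \<longleftrightarrow>
     f \<in> mon G H \<and> (\<forall>x\<in>carrier G. \<forall>y\<in>carrier G. RG x y \<longrightarrow> RH (f x) (f y))"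

definition order_embeds ::
  "('a, 'b) monoid_scheme \<Rightarrow> ('a \<Rightarrow> 'a \<Rightarrow> bool) \<Rightarrow> ('c, 'd) monoid_scheme \<Rightarrow> ('c \<Rightarrow> 'c \<Rightarrow> bool) \<Rightarrow> bool" where
  "order_embeds G RG H RH \<longleftrightarrow> (\<exists>f. order_embedding G RG H RH f)"

end

theory Submission
  imports Defs "HOL-Library.Nat_Bijection" "HOL-Analysis.Continuum_Not_Denumerable"
begin

definition enc :: "int \<times> int \<Rightarrow> nat" where
  "enc p = prod_encode (int_encode (fst p), int_encode (snd p))"
definition dec :: "nat \<Rightarrow> int \<times> int" where
  "dec n = (int_decode (fst (prod_decode n)), int_decode (snd (prod_decode n)))"

lemma dec_enc[simp]: "dec (enc p) = p"
  by (simp add: enc_def dec_def)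
lemma enc_dec[simp]: "enc (dec n) = n"
  by (simp add: enc_def dec_def)

definition add2 :: "int \<times> int \<Rightarrow> int \<times> int \<Rightarrow> int \<times> int" where
  "add2 p q = (fst p + fst q, snd p + snd q)"

definition Z2 :: "nat monoid" where
  "Z2 = \<lparr>carrier = UNIV, monoid.mult = (\<lambda>x y. enc (add2 (dec x) (dec y))), monoid.one = enc (0,0)\<rparr>"

lemma Z2_simps[simp]: "carrier Z2 = UNIV" "x \<otimes>\<^bsub>Z2\<^esub> y = enc (add2 (dec x) (dec y))"
  "\<one>\<^bsub>Z2\<^esub> = enc (0,0)"
  by (simp_all add: Z2_def)

lemma Z2_comm_group: "comm_group Z2"
proof (rule comm_groupI)
  fix x
  show "\<exists>y\<in>carrier Z2. y \<otimes>\<^bsub>Z2\<^esub> x = \<one>\<^bsub>Z2\<^esub>"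
    by (rule bexI[of _ "enc (- fst (dec x), - snd (dec x))"]) (auto simp: add2_def)
qed (auto simp: add2_def algebra_simps)

lemma Z2_group: "group Z2"
  using Z2_comm_group comm_group.axioms(2) by blast

lemma Z2_inv: "inv\<^bsub>Z2\<^esub> (enc (a,b)) = enc (-a,-b)"
  by (rule group.inv_equality[OF Z2_group]) (auto simp: add2_def)

lemma Z2_gen_all: "enc (a,b) \<in> generate Z2 {enc (1,0), enc (0,1)}"
proof -
  let ?G = "generate Z2 {enc (1,0), enc (0,1)}"
  have g1: "enc (1,0) \<in> ?G" and g2: "enc (0,1) \<in> ?G" by (auto intro: generate.incl)
  have g1i: "enc (-1,0) \<in> ?G" using generate.inv[of "enc (1,0)" "{enc (1,0), enc (0,1)}" Z2] Z2_inv[of 1 0] by simp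
  have g2i: "enc (0,-1) \<in> ?G" using generate.inv[of "enc (0,1)" "{enc (1,0), enc (0,1)}" Z2] Z2_inv[of 0 1] by simp
  have b0: "enc (0,b) \<in> ?G" for b
  proof (induct b rule: int_induct[where k=0])
    case base
    then show ?case using generate.one[of Z2] by simp
  next
    case (step1 i)
    then show ?case using generate.eng[OF step1(2) g2] by (simp add: add2_def)
  next
    case (step2 i)
    then show ?case using generate.eng[OF step2(2) g2i] by (simp add: add2_def)
  qed
  show ?thesis
  proof (induct a rule: int_induct[where k=0])
    case base
    then show ?case using b0 by simp
  next
    case (step1 i)
    then show ?case using generate.eng[OF step1(2) g1] by (simp add: add2_def)
  next
    case (step2 i)
    then show ?case using generate.eng[OF step2(2) g1i] by (simp add: add2_def)
  qed
qed

lemma Z2_gen: "generate Z2 {enc (1,0), enc (0,1)} = carrier Z2"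
proof -
  have "n \<in> generate Z2 {enc (1,0), enc (0,1)}" for n
    using Z2_gen_all[of "fst (dec n)" "snd (dec n)"] by simp
  then show ?thesis unfolding Z2_simps(1) by blast
qed

lemma Z2_fg: "finitely_generated_group Z2"
  unfolding finitely_generated_group_def
  by (rule exI[of _ "{enc (1,0), enc (0,1)}"]) (simp add: Z2_gen)

definition key :: "real \<Rightarrow> nat \<Rightarrow> real" where
  "key \<alpha> x = of_int (fst (dec x)) + \<alpha> * of_int (snd (dec x))"

definition Rord :: "real \<Rightarrow> nat \<Rightarrow> nat \<Rightarrow> bool" where
  "Rord \<alpha> x y \<longleftrightarrow> key \<alpha> x < key \<alpha> y \<or> (key \<alpha> x = key \<alpha> y \<and> snd (dec x) \<le> snd (dec y))"

lemma key_mult: "key \<alpha> (enc (add2 (dec x) (dec y))) = key \<alpha> x + key \<alpha> y"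
  by (simp add: key_def add2_def algebra_simps)

lemma snd_add2: "snd (add2 p q) = snd p + snd q"
  by (simp add: add2_def)

lemma Rord_total: "total_order_on UNIV (Rord \<alpha>)"
proof -
  have anti: "x = y" if "Rord \<alpha> x y" "Rord \<alpha> y x" for x y
  proof -
    have k: "key \<alpha> x = key \<alpha> y" and s: "snd (dec x) = snd (dec y)"
      using that by (auto simp: Rord_def)
    then have "fst (dec x) = fst (dec y)" by (simp add: key_def)
    with s have "dec x = dec y" by (simp add: prod_eq_iff)
    then show ?thesis by (metis enc_dec)
  qed
  show ?thesis unfolding total_order_on_def
    using anti by (auto simp: Rord_def)
qed

lemma Rord_tog: "totally_ordered_group Z2 (Rord \<alpha>)"
  unfolding totally_ordered_group_def right_ordered_group_def
  using Z2_group Rord_total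
  by (auto simp: Rord_def key_mult snd_add2)

lemma Rord_distinct:
  assumes "\<alpha> < \<beta>" shows "Rord \<alpha> \<noteq> Rord \<beta>"
proof -
  obtain r where r: "r \<in> \<rat>" "\<alpha> < r" "r < \<beta>" using Rats_dense_in_real[OF assms] by blast
  then obtain a b :: int where b: "b > 0" "r = of_int a / of_int b" by (meson Rats_cases')
  define x where "x = enc (-a, b)"
  have "key \<alpha> x = of_int b * (\<alpha> - r)" using b by (simp add: key_def x_def field_simps)
  moreover have "key \<beta> x = of_int b * (\<beta> - r)" using b by (simp add: key_def x_def field_simps)
  ultimately have "key \<alpha> x < 0" "key \<beta> x > 0" using b r
    by (auto intro: mult_pos_pos mult_pos_neg)
  moreover have "key \<gamma> (enc (0,0)) = 0" for \<gamma> by (simp add: key_def)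
  ultimately have "Rord \<alpha> x (enc (0,0))" "\<not> Rord \<beta> x (enc (0,0))"
    by (auto simp: Rord_def)
  then show ?thesis by metis
qed

lemma Rord_inj: "inj Rord"
  by (metis Rord_distinct injI linorder_neqE)

lemma hom_agree:
  assumes "group G" "group K" "f \<in> hom G K" "g \<in> hom G K" "S \<subseteq> carrier G"
    "\<forall>s\<in>S. f s = g s" "x \<in> generate G S"
  shows "f x = g x"
proof -
  have hf: "group_hom G K f" using assms by (simp add: group_hom_def group_hom_axioms_def)
  have hg: "group_hom G K g" using assms by (simp add: group_hom_def group_hom_axioms_def)
  have gc: "generate G S \<subseteq> carrier G" using group.generate_in_carrier[OF assms(1) assms(5)] by blast
  show ?thesis
  using assms(7)
  proof induct
    case one
    then show ?case using group_hom.hom_one[OF hf] group_hom.hom_one[OF hg] by simp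
  next
    case (incl h)
    then show ?case using assms(6) by blast
  next
    case (inv h)
    have hc: "h \<in> carrier G" using inv assms(5) by blast
    have "f (inv\<^bsub>G\<^esub> h) = inv\<^bsub>K\<^esub> f h" using group_hom.hom_inv[OF hf hc] .
    moreover have "g (inv\<^bsub>G\<^esub> h) = inv\<^bsub>K\<^esub> g h" using group_hom.hom_inv[OF hg hc] .
    moreover have "f h = g h" using inv assms(6) by blast
    ultimately show ?case by simp
  next
    case (eng h1 h2)
    have c: "h1 \<in> carrier G" "h2 \<in> carrier G" using eng(1,3) gc by blast+
    show ?case using hom_mult[OF assms(3) c] hom_mult[OF assms(4) c] eng(2,4) by simp
  qed
qed

lemma pullback:
  assumes U: "right_ordered_group U RU" and T: "total_order_on (carrier H) RH"
    and E: "order_embedding H RH U RU f" and x: "x \<in> carrier H" and y: "y \<in> carrier H"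
  shows "RH x y \<longleftrightarrow> RU (f x) (f y)"
proof
  assume "RH x y" then show "RU (f x) (f y)" using E x y by (simp add: order_embedding_def)
next
  assume a: "RU (f x) (f y)"
  show "RH x y"
  proof (rule ccontr)
    assume n: "\<not> RH x y"
    then have "RH y x" using T x y unfolding total_order_on_def by blast
    then have "RU (f y) (f x)" using E x y by (simp add: order_embedding_def)
    have fc: "f x \<in> carrier U" "f y \<in> carrier U"
      using E x y unfolding order_embedding_def mon_def hom_def by blast+
    have TU: "total_order_on (carrier U) RU" using U by (simp add: right_ordered_group_def)
    have "f x = f y" using TU a \<open>RU (f y) (f x)\<close> fc unfolding total_order_on_def
      by blast
    moreover have "inj_on f (carrier H)" using E by (simp add: order_embedding_def mon_def)
    ultimately have "x = y" using x y by (simp add: inj_on_def)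
    then show False using n T x unfolding total_order_on_def by blast
  qed
qed

lemma part1:
  "\<not> (\<exists>(U :: 'u monoid) RU.
              right_ordered_group U RU \<and> countable (carrier U) \<and>
              (\<forall>(H :: nat monoid) RH.
                 totally_ordered_group H RH \<and> comm_group H \<and> finitely_generated_group H
                 \<longrightarrow> order_embeds H RH U RU))"
proof
  assume "\<exists>(U :: 'u monoid) RU.
              right_ordered_group U RU \<and> countable (carrier U) \<and>
              (\<forall>(H :: nat monoid) RH.
                 totally_ordered_group H RH \<and> comm_group H \<and> finitely_generated_group H
                 \<longrightarrow> order_embeds H RH U RU)"
  then obtain U :: "'u monoid" and RU where U: "right_ordered_group U RU" and C: "countable (carrier U)"
    and A: "\<And>(H :: nat monoid) RH. totally_ordered_group H RH \<Longrightarrow> comm_group H \<Longrightarrow> finitely_generated_group H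
                 \<Longrightarrow> order_embeds H RH U RU" by blast
  have "\<forall>\<alpha>. \<exists>f. order_embedding Z2 (Rord \<alpha>) U RU f"
    using A[OF Rord_tog Z2_comm_group Z2_fg] by (simp add: order_embeds_def)
  then obtain F where F: "\<And>\<alpha>. order_embedding Z2 (Rord \<alpha>) U RU (F \<alpha>)" by metis
  have hom: "F \<alpha> \<in> hom Z2 U" for \<alpha> using F[of \<alpha>] by (simp add: order_embedding_def mon_def)
  have gU: "group U" using U by (simp add: right_ordered_group_def)
  define \<phi> where "\<phi> \<alpha> = (F \<alpha> (enc (1,0)), F \<alpha> (enc (0,1)))" for \<alpha>
  have sub: "\<phi> ` UNIV \<subseteq> carrier U \<times> carrier U"
    using hom by (auto simp: \<phi>_def hom_def)
  have "countable (carrier U \<times> carrier U)" using C by simp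
  then have cimg: "countable (\<phi> ` UNIV)" using sub countable_subset by blast
  have "inj \<phi>"
  proof (rule injI)
    fix \<alpha> \<beta> assume eq: "\<phi> \<alpha> = \<phi> \<beta>"
    have agree: "F \<alpha> x = F \<beta> x" for x
    proof -
      have "\<forall>s\<in>{enc (1,0), enc (0,1)}. F \<alpha> s = F \<beta> s" using eq by (simp add: \<phi>_def)
      moreover have "x \<in> generate Z2 {enc (1,0), enc (0,1)}" using Z2_gen by simp
      ultimately show ?thesis
        using hom_agree[OF Z2_group gU hom[of \<alpha>] hom[of \<beta>]] by (metis Z2_simps(1) subset_UNIV)
    qed
    have "Rord \<alpha> x y = Rord \<beta> x y" for x y
      using pullback[OF U _ F, of \<alpha> x y] pullback[OF U _ F, of \<beta> x y] Rord_total agree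
      by simp
    then have "Rord \<alpha> = Rord \<beta>" by (intro ext)
    then show "\<alpha> = \<beta>" using Rord_inj by (simp add: inj_eq)
  qed
  then have "countable (UNIV :: real set)" using cimg countable_image_inj_on by blast
  then show False using uncountable_UNIV_real by blast
qed

theorem mainTheorem2:
  shows "(\<not> (\<exists>(U :: 'u monoid) RU.
              right_ordered_group U RU \<and> countable (carrier U) \<and>
              (\<forall>(H :: nat monoid) RH.
                 totally_ordered_group H RH \<and> comm_group H \<and> finitely_generated_group H
                 \<longrightarrow> order_embeds H RH U RU)))
       \<and>
         (\<not> (\<exists>(U :: 'u monoid) RU.
              right_ordered_group U RU \<and> countable (carrier U) \<and>
              (\<forall>(H :: nat monoid) RH.
                 right_ordered_group H RH \<and> finitely_generated_group H
                 \<longrightarrow> order_embeds H RH U RU)))"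
  using part1 unfolding totally_ordered_group_def by blast

end
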